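(* Let $\mathcal{L}(\mathbf{x},y;\mathbf{w})=g(-y\langle\mathbf{w},\mathbf{x}\rangle)$ where $g:\mathbb{R}\to\mathbb{R}$ is non-decreasing, convex and almost-everywhere differentiable (with the integrals defining the IG below assumed well defined). Fix $y\in\{-1,+1\}$, $\mathbf{w}\in\mathbb{R}^d$, $\mathbf{x}\in\mathbb{R}^d$, $\varepsilon>0$, and let $\mathcal{L}_y:\mathbb{R}^d\to\mathbb{R}$ be $\mathcal{L}_y(\mathbf{z})=\mathcal{L}(\mathbf{z},y;\mathbf{w})$. Then $$\mathcal{L}(\mathbf{x},y;\mathbf{w})+\max_{\|\mathbf{x}'-\mathbf{x}\|_\infty\le\varepsilon}\big\|\mathrm{IG}^{\mathcal{L}_y}(\mathbf{x},\mathbf{x}')\big\|_1=\max_{\|\delta\|_\infty\le\varepsilon}\mathcal{L}(\mathbf{x}+\delta,y;\mathbf{w}).$$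
   Context: For $F:\mathbb{R}^d\to\mathbb{R}$, input $\mathbf{x}$ and baseline $\mathbf{u}$, the Integrated Gradients attribution is the vector $\mathrm{IG}^F(\mathbf{x},\mathbf{u})$ with components $\mathrm{IG}_i^F(\mathbf{x},\mathbf{u}):=(x_i-u_i)\int_0^1\partial_iF(\mathbf{u}+\alpha(\mathbf{x}-\mathbf{u}))\,d\alpha$, where $\partial_iF$ is the partial derivative of $F$ in the $i$-th coordinate. In the claim, $\mathbf{x}'$ plays the role of the baseline. *)

theory Defs
  imports "HOL-Analysis.Analysis"
begin

definition loss :: "(real \<Rightarrow> real) \<Rightarrow> real^'n \<Rightarrow> real \<Rightarrow> real^'n \<Rightarrow> real" where
  "loss g x y w = g (- (y * (w \<bullet> x)))"

definition has_partial :: "(real^'n \<Rightarrow> real) \<Rightarrow> 'n \<Rightarrow> real^'n \<Rightarrow> bool" where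
  "has_partial F i z \<longleftrightarrow> (\<exists>D. ((\<lambda>t. F (z + t *\<^sub>R axis i 1)) has_real_derivative D) (at 0))"

definition partial :: "(real^'n \<Rightarrow> real) \<Rightarrow> 'n \<Rightarrow> real^'n \<Rightarrow> real" where
  "partial F i z = deriv (\<lambda>t. F (z + t *\<^sub>R axis i 1)) 0"

definition IG :: "(real^'n \<Rightarrow> real) \<Rightarrow> real^'n \<Rightarrow> real^'n \<Rightarrow> 'n \<Rightarrow> real" where
  "IG F x u i = (x $ i - u $ i) *
     integral {0..1} (\<lambda>\<alpha>. partial F i (u + \<alpha> *\<^sub>R (x - u)))"

definition IG_well_defined :: "(real^'n \<Rightarrow> real) \<Rightarrow> real^'n \<Rightarrow> real^'n \<Rightarrow> bool" where
  "IG_well_defined F x u \<longleftrightarrow> (\<forall>i.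
     negligible {\<alpha>\<in>{0..1}. \<not> has_partial F i (u + \<alpha> *\<^sub>R (x - u))} \<and>
     (\<lambda>\<alpha>. partial F i (u + \<alpha> *\<^sub>R (x - u))) integrable_on {0..1})"

definition IG_l1 :: "(real^'n \<Rightarrow> real) \<Rightarrow> real^'n \<Rightarrow> real^'n \<Rightarrow> real" where
  "IG_l1 F x u = (\<Sum>i\<in>UNIV. \<bar>IG F x u i\<bar>)"

definition linf_cball :: "real^'n \<Rightarrow> real \<Rightarrow> (real^'n) set" where
  "linf_cball x e = {z. \<forall>i. \<bar>z $ i - x $ i\<bar> \<le> e}"

definition is_max :: "real set \<Rightarrow> real \<Rightarrow> bool" where
  "is_max S m \<longleftrightarrow> m \<in> S \<and> (\<forall>s\<in>S. s \<le> m)"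

end

theory Submission
  imports Defs
begin

lemma convex_ftc:
  fixes f f' :: "real \<Rightarrow> real"
  assumes conv: "convex_on UNIV f" and ab: "a \<le> b" and N: "negligible N"
    and der: "\<And>t. t \<in> {a..b} - N \<Longrightarrow> (f has_real_derivative f' t) (at t)"
    and int: "f' integrable_on {a..b}"
  shows "integral {a..b} f' = f b - f a"
proof -
  have contf: "continuous_on UNIV f" using convex_on_continuous[OF open_UNIV conv] .
  have intf: "f integrable_on {c..d}" for c d
    by (rule integrable_continuous_interval, rule continuous_on_subset[OF contf]) auto
  define P where "P t = integral {a-1..t} f" for t
  have Pder: "(P has_real_derivative f t) (at t)" if "t \<in> {a-1<..<b+1}" for t
  proof -
    have "(P has_real_derivative f t) (at t within {a-1..b+1})"
      unfolding P_def using that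
      by (intro integral_has_real_derivative continuous_on_subset[OF contf]) auto
    moreover have "t \<in> interior {a-1..b+1}" using that by auto
    ultimately show ?thesis using at_within_interior[of t "{a-1..b+1}"] by simp
  qed
  define E where "E h = ((P (b+h) - P b) / h) - ((P (a+h) - P a) / h)" for h
  have lim: "(E \<longlongrightarrow> f b - f a) (at 0)"
  proof -
    have l: "((\<lambda>h. (P (c+h) - P c) / h) \<longlongrightarrow> f c) (at 0)" if "c \<in> {a-1<..<b+1}" for c
    proof -
      have "((\<lambda>h. P (h + c)) has_real_derivative f c) (at 0)"
        using Pder[OF that] DERIV_shift[of P "f c" 0 c] by simp
      hence "((\<lambda>h. (P (h + c) - P (0 + c)) / (h - 0)) \<longlongrightarrow> f c) (at 0)"
        unfolding has_field_derivative_iff by simp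
      thus ?thesis by (simp add: add.commute)
    qed
    show ?thesis unfolding E_def
      by (intro tendsto_diff l) (use ab in auto)
  qed
  have IE: "integral {a..b} (\<lambda>t. (f (t+h) - f t) / h) = E h" if h: "\<bar>h\<bar> < 1" for h
  proof -
    have "integral {a..b} (\<lambda>t. f (t+h)) = integral {a+h..b+h} f"
      using integral_shift_Icc_real[of a b f h] by (simp add: o_def add.commute)
    also have "\<dots> = P (b+h) - P (a+h)"
      unfolding P_def using Henstock_Kurzweil_Integration.integral_combine[where a="a-1" and c="a+h" and b="b+h" and f=f] intf h ab by (auto simp: abs_less_iff)
    finally have 1: "integral {a..b} (\<lambda>t. f (t+h)) = P (b+h) - P (a+h)" .
    have 2: "integral {a..b} f = P b - P a"
      unfolding P_def using Henstock_Kurzweil_Integration.integral_combine[where a="a-1" and c="a" and b="b" and f=f] intf ab by auto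
    have i1: "(\<lambda>t. f (t+h)) integrable_on {a..b}"
      by (rule integrable_continuous_interval, rule continuous_on_compose2[OF contf])
         (auto intro!: continuous_intros)
    have "integral {a..b} (\<lambda>t. (f (t+h) - f t) / h) = (integral {a..b} (\<lambda>t. f (t+h)) - integral {a..b} f) / h"
      using integral_diff[OF i1 intf] by simp
    also have "\<dots> = E h" unfolding 1 2 E_def by (simp add: diff_divide_distrib)
    finally show ?thesis .
  qed
  have cmp: "(integral {a..b} f' - E h) * h \<le> 0" if h: "\<bar>h\<bar> < 1" "h \<noteq> 0" for h
  proof -
    define f'' where "f'' t = (if t \<in> N then (f (t+h) - f t) / h else f' t)" for t
    have eq: "integral {a..b} f' = integral {a..b} f''"
      by (rule integral_spike[OF N]) (auto simp: f''_def)
    have i2: "f'' integrable_on {a..b}"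
      by (rule integrable_spike[OF int N]) (auto simp: f''_def)
    have i3: "(\<lambda>t. (f (t+h) - f t) / h) integrable_on {a..b}"
      by (rule integrable_continuous_interval, intro continuous_intros continuous_on_compose2[OF contf] continuous_on_subset[OF contf])
         (use h(2) in auto)
    have tang: "f' t * h \<le> f (t+h) - f t" if "t \<in> {a..b} - N" for t
      using convex_on_imp_above_tangent[OF conv connected_UNIV _ _, of t "t+h" "f' t"] der[OF that]
      by simp
    show ?thesis
    proof (cases "h > 0")
      case True
      have "integral {a..b} f'' \<le> integral {a..b} (\<lambda>t. (f (t+h) - f t) / h)"
        using i2 i3 proof (rule integral_le)
        fix t assume "t \<in> {a..b}"
        thus "f'' t \<le> (f (t+h) - f t) / h" using tang[of t] True
          by (auto simp: f''_def pos_le_divide_eq)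
      qed
      thus ?thesis using IE[OF h(1)] eq True by (simp add: mult_nonpos_nonneg)
    next
      case False
      hence hn: "h < 0" using h by auto
      have "integral {a..b} f'' \<ge> integral {a..b} (\<lambda>t. (f (t+h) - f t) / h)"
        using i3 i2 proof (rule integral_le)
        fix t assume "t \<in> {a..b}"
        thus "f'' t \<ge> (f (t+h) - f t) / h" using tang[of t] hn
          by (auto simp: f''_def neg_divide_le_eq)
      qed
      thus ?thesis using IE[OF h(1)] eq hn by (simp add: mult_nonneg_nonpos)
    qed
  qed
  have evr: "eventually (\<lambda>h. \<bar>h\<bar> < 1 \<and> h \<noteq> 0 \<and> h > 0) (at_right (0::real))"
    using eventually_at_right_real[of 0 1] by (rule eventually_mono) auto
  have evl: "eventually (\<lambda>h. \<bar>h\<bar> < 1 \<and> h \<noteq> 0 \<and> h < 0) (at_left (0::real))"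
    using eventually_at_left_real[of "-1" 0] by (rule eventually_mono) auto
  have "integral {a..b} f' \<le> f b - f a"
  proof (rule tendsto_lowerbound[OF tendsto_mono[OF at_le lim]])
    show "\<forall>\<^sub>F h in at_right 0. integral {a..b} f' \<le> E h"
      using evr proof eventually_elim
      case (elim h) thus ?case using cmp[of h] by (auto simp: mult_le_0_iff)
    qed
  qed auto
  moreover have "integral {a..b} f' \<ge> f b - f a"
  proof (rule tendsto_upperbound[OF tendsto_mono[OF at_le lim]])
    show "\<forall>\<^sub>F h in at_left 0. integral {a..b} f' \<ge> E h"
      using evl proof eventually_elim
      case (elim h) thus ?case using cmp[of h] by (auto simp: mult_le_0_iff)
    qed
  qed auto
  ultimately show ?thesis by simp
qed

definition sfun :: "real \<Rightarrow> real^'n \<Rightarrow> real^'n \<Rightarrow> real" where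
  "sfun y w z = -(y * (w \<bullet> z))"

lemma loss_line: "loss g (z + t *\<^sub>R axis i 1) y w = g (sfun y w z + t * (-(y * w$i)))"
  unfolding loss_def sfun_def by (simp add: inner_add_right inner_axis algebra_simps)

lemma partial_eq:
  assumes "w$i = 0 \<or> g differentiable at (sfun y w z)"
  shows "partial (\<lambda>z. loss g z y w) i z = -(y * w$i) * deriv g (sfun y w z)"
proof -
  have p: "partial (\<lambda>z. loss g z y w) i z = deriv (\<lambda>t. g (sfun y w z + t * (-(y * w$i)))) 0"
    unfolding partial_def loss_line ..
  show ?thesis
  proof (cases "w$i = 0")
    case True
    thus ?thesis unfolding p by simp
  next
    case False
    hence d: "DERIV g (sfun y w z) :> deriv g (sfun y w z)"
      using assms DERIV_deriv_iff_real_differentiable by blast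
    have l: "((\<lambda>t. sfun y w z + t * (-(y * w$i))) has_real_derivative (-(y * w$i))) (at 0)"
      by (auto intro!: derivative_eq_intros)
    have "DERIV (\<lambda>t. g (sfun y w z + t * (-(y * w$i)))) 0 :> deriv g (sfun y w z) * (-(y * w$i))"
      using DERIV_chain2[where f=g and g="\<lambda>t. sfun y w z + t * (-(y * w$i))" and x=0, OF _ l] d by simp
    thus ?thesis unfolding p by (simp add: DERIV_imp_deriv)
  qed
qed

lemma has_partial_diff:
  assumes "w$i \<noteq> 0" "y \<noteq> 0" "has_partial (\<lambda>z. loss g z y w) i z"
  shows "g differentiable at (sfun y w z)"
proof -
  define k where "k = -(y * w$i)"
  have k: "k \<noteq> 0" using assms by (simp add: k_def)
  obtain D where D: "((\<lambda>t. g (sfun y w z + t * k)) has_real_derivative D) (at 0)"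
    using assms(3) unfolding has_partial_def loss_line k_def by blast
  have l: "((\<lambda>r. (r - sfun y w z) / k) has_real_derivative (1/k)) (at (sfun y w z))"
    using k by (auto intro!: derivative_eq_intros)
  have "((\<lambda>r. g (sfun y w z + ((r - sfun y w z) / k) * k)) has_real_derivative D * (1/k)) (at (sfun y w z))"
    using DERIV_chain2[where f="\<lambda>t. g (sfun y w z + t * k)" and g="\<lambda>r. (r - sfun y w z) / k", OF _ l] D by simp
  moreover have "(\<lambda>r. g (sfun y w z + ((r - sfun y w z) / k) * k)) = g" using k by (simp add: field_simps)
  ultimately show ?thesis unfolding real_differentiable_def by auto
qed

lemma path_s: "sfun y w (u + a *\<^sub>R (x - u)) = sfun y w u + a * (sfun y w x - sfun y w u)"
  unfolding sfun_def by (simp add: inner_add_right inner_diff_right algebra_simps)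

lemma convex_affine_comp:
  assumes conv: "convex_on UNIV (g::real\<Rightarrow>real)"
  shows "convex_on UNIV (\<lambda>a. g (p + a * c))"
proof (rule convex_onI)
  fix t a b :: real assume t: "t > 0" "t < 1"
  have "g ((1 - t) *\<^sub>R (p + a * c) + t *\<^sub>R (p + b * c)) \<le> (1 - t) * g (p + a * c) + t * g (p + b * c)"
    using convex_onD[OF conv, of t] t by simp
  moreover have "(1 - t) *\<^sub>R (p + a * c) + t *\<^sub>R (p + b * c) = p + ((1 - t) *\<^sub>R a + t *\<^sub>R b) * c"
    by (simp add: algebra_simps)
  ultimately show "g (p + ((1 - t) *\<^sub>R a + t *\<^sub>R b) * c) \<le> (1 - t) * g (p + a * c) + t * g (p + b * c)"
    by simp
qed auto

lemma IG_comp: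
  assumes y0: "y \<noteq> 0" and wd: "IG_well_defined (\<lambda>z. loss g z y w) x u"
  shows "integral {0..1} (\<lambda>a. partial (\<lambda>z. loss g z y w) i (u + a *\<^sub>R (x - u))) =
    -(y * w$i) * integral {0..1} (\<lambda>a. deriv g (sfun y w u + a * (sfun y w x - sfun y w u)))"
proof (cases "w$i = 0")
  case True
  thus ?thesis using partial_eq[of w i] by simp
next
  case False
  have N: "negligible {a\<in>{0..1}. \<not> has_partial (\<lambda>z. loss g z y w) i (u + a *\<^sub>R (x - u))}"
    using wd unfolding IG_well_defined_def by blast
  have "integral {0..1} (\<lambda>a. partial (\<lambda>z. loss g z y w) i (u + a *\<^sub>R (x - u))) =
    integral {0..1} (\<lambda>a. -(y * w$i) * deriv g (sfun y w u + a * (sfun y w x - sfun y w u)))"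
  proof (rule integral_spike[OF N, symmetric])
    fix a assume a: "a \<in> {0..1} - {a\<in>{0..1}. \<not> has_partial (\<lambda>z. loss g z y w) i (u + a *\<^sub>R (x - u))}"
    hence "g differentiable at (sfun y w (u + a *\<^sub>R (x - u)))"
      using has_partial_diff[OF False y0] by blast
    thus "partial (\<lambda>z. loss g z y w) i (u + a *\<^sub>R (x - u)) = -(y * w$i) * deriv g (sfun y w u + a * (sfun y w x - sfun y w u))"
      using partial_eq[of w i g y "u + a *\<^sub>R (x - u)"] by (simp add: path_s)
  qed
  thus ?thesis by simp
qed

lemma IG_l1_formula:
  assumes y1: "\<bar>y\<bar> = 1" and wd: "IG_well_defined (\<lambda>z. loss g z y w) x u"
  shows "IG_l1 (\<lambda>z. loss g z y w) x u = (\<Sum>i\<in>UNIV. \<bar>x$i - u$i\<bar> * \<bar>w$i\<bar>) *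
     \<bar>integral {0..1} (\<lambda>a. deriv g (sfun y w u + a * (sfun y w x - sfun y w u)))\<bar>"
proof -
  have y0: "y \<noteq> 0" using y1 by auto
  show ?thesis
    unfolding IG_l1_def IG_def IG_comp[OF y0 wd] sum_distrib_right
    by (rule sum.cong) (auto simp: abs_mult y1)
qed

lemma J_ftc:
  assumes conv: "convex_on UNIV g" and y0: "y \<noteq> 0" and wd: "IG_well_defined (\<lambda>z. loss g z y w) x u"
    and wi: "w$i \<noteq> 0"
  defines "J \<equiv> integral {0..1} (\<lambda>a. deriv g (sfun y w u + a * (sfun y w x - sfun y w u)))"
  shows "(sfun y w x - sfun y w u) * J = g (sfun y w x) - g (sfun y w u)"
    and "sfun y w x = sfun y w u \<Longrightarrow> g differentiable at (sfun y w x) \<and> J = deriv g (sfun y w x)"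
proof -
  define su where "su = sfun y w u"
  define c where "c = sfun y w x - sfun y w u"
  define Nb where "Nb = {a\<in>{0..1}. \<not> has_partial (\<lambda>z. loss g z y w) i (u + a *\<^sub>R (x - u))}"
  have N: "negligible Nb"
    using wd unfolding IG_well_defined_def Nb_def by blast
  have good: "g differentiable at (su + a * c)" if "a \<in> {0..1} - Nb" for a
    using has_partial_diff[OF wi y0, of g "u + a *\<^sub>R (x - u)"] that
    unfolding Nb_def su_def c_def by (auto simp: path_s)
  have int0: "(\<lambda>a. partial (\<lambda>z. loss g z y w) i (u + a *\<^sub>R (x - u))) integrable_on {0..1}"
    using wd unfolding IG_well_defined_def by blast
  have int1: "(\<lambda>a. -(y * w$i) * deriv g (su + a * c)) integrable_on {0..1}"
  proof (rule integrable_spike[OF int0 N])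
    fix a assume a: "a \<in> {0..1} - Nb"
    show "-(y * w$i) * deriv g (su + a * c) = partial (\<lambda>z. loss g z y w) i (u + a *\<^sub>R (x - u))"
      using partial_eq[of w i g y "u + a *\<^sub>R (x - u)"] good[OF a]
      by (simp add: path_s su_def c_def)
  qed
  have int2: "(\<lambda>a. deriv g (su + a * c) * c) integrable_on {0..1}"
  proof -
    have "(\<lambda>a. (c / -(y * w$i)) * (-(y * w$i) * deriv g (su + a * c))) integrable_on {0..1}"
      using integrable_on_cmult_left[OF int1, of "c / -(y * w$i)"] by simp
    moreover have "(\<lambda>a. (c / -(y * w$i)) * (-(y * w$i) * deriv g (su + a * c))) = (\<lambda>a. deriv g (su + a * c) * c)"
      using y0 wi by (auto simp: field_simps)
    ultimately show ?thesis by simp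
  qed
  have ftc: "integral {0..1} (\<lambda>a. deriv g (su + a * c) * c) = g (su + 1 * c) - g (su + 0 * c)"
  proof (rule convex_ftc[OF convex_affine_comp[OF conv] _ N _ int2])
    fix t assume t: "t \<in> {0..1} - Nb"
    have d: "DERIV g (su + t * c) :> deriv g (su + t * c)"
      using good[OF t] DERIV_deriv_iff_real_differentiable by blast
    have l: "((\<lambda>a. su + a * c) has_real_derivative c) (at t)"
      by (auto intro!: derivative_eq_intros)
    show "((\<lambda>a. g (su + a * c)) has_real_derivative deriv g (su + t * c) * c) (at t)"
      using DERIV_chain2[where f=g and g="\<lambda>a. su + a * c", OF d l] .
  qed simp
  show "(sfun y w x - sfun y w u) * J = g (sfun y w x) - g (sfun y w u)"
    using ftc unfolding J_def su_def[symmetric] c_def[symmetric] by (simp add: c_def su_def mult.commute)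
  assume eq: "sfun y w x = sfun y w u"
  have c0: "c = 0" using eq by (simp add: c_def)
  have "\<not> {0..1::real} \<subseteq> Nb"
  proof
    assume "{0..1::real} \<subseteq> Nb"
    hence "negligible {0..1::real}" using negligible_subset[OF N] by blast
    thus False using negligible_interval(1)[of "0::real" 1] by simp
  qed
  then obtain a where "a \<in> {0..1} - Nb" by blast
  hence dx: "g differentiable at (sfun y w x)" using good c0 eq by (simp add: su_def)
  have "J = deriv g (sfun y w x)" unfolding J_def using eq by simp
  with dx show "g differentiable at (sfun y w x) \<and> J = deriv g (sfun y w x)" by simp
qed

lemma key_bound:
  fixes g :: "real \<Rightarrow> real"
  assumes mono: "mono g" and conv: "convex_on UNIV g" and B0: "0 \<le> B" and BA: "B \<le> A"
    and cB: "\<bar>S - su\<bar> \<le> B" and ftc: "(S - su) * J = g S - g su"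
    and eq: "S = su \<Longrightarrow> g differentiable at S \<and> J = deriv g S"
  shows "B * \<bar>J\<bar> \<le> g (S + A) - g S"
proof -
  have A0: "A \<ge> 0" using B0 BA by simp
  have gA: "g S \<le> g (S + A)" using monoD[OF mono] A0 by simp
  have slope: "(g S - g p) / (S - p) \<le> (g (S + A) - g S) / A" if "p < S" "A > 0" for p
  proof -
    have "(g p - g S) / (p - S) \<le> (g p - g (S + A)) / (p - (S + A))"
         "(g p - g (S + A)) / (p - (S + A)) \<le> (g S - g (S + A)) / (S - (S + A))"
      using convex_on_slope_le[OF conv, of p "S + A" S] that by auto
    moreover have "(g p - g S) / (p - S) = (g S - g p) / (S - p)"
      by (simp add: field_split_simps; simp add: algebra_simps)
    moreover have "(g S - g (S + A)) / (S - (S + A)) = (g (S + A) - g S) / A"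
      by (simp add: field_split_simps; simp add: algebra_simps)
    ultimately show ?thesis by linarith
  qed
  have slope2: "(g q - g S) / (q - S) \<le> (g (S + A) - g S) / A" if "S < q" "q \<le> S + A" for q
  proof (cases "q = S + A")
    case True thus ?thesis by simp
  next
    case False
    hence "(g S - g q) / (S - q) \<le> (g S - g (S + A)) / (S - (S + A))"
      using convex_on_slope_le[OF conv, of S "S + A" q] that by auto
    moreover have "(g S - g q) / (S - q) = (g q - g S) / (q - S)"
      by (simp add: field_split_simps; simp add: algebra_simps)
    moreover have "(g S - g (S + A)) / (S - (S + A)) = (g (S + A) - g S) / A"
      by (simp add: field_split_simps; simp add: algebra_simps)
    ultimately show ?thesis by linarith
  qed
  show ?thesis
  proof (cases "B = 0")
    case True thus ?thesis using gA by simp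
  next
    case Bn: False
    hence Apos: "A > 0" using B0 BA by simp
    show ?thesis
    proof (cases "S = su")
      case True
      with eq have d: "DERIV g S :> J"
        using DERIV_deriv_iff_real_differentiable by auto
      have t1: "g (S + A) - g S \<ge> J * (S + A - S)"
        by (rule convex_on_imp_above_tangent[OF conv connected_UNIV]) (use d in auto)
      have t2: "g (S - 1) - g S \<ge> J * (S - 1 - S)"
        by (rule convex_on_imp_above_tangent[OF conv connected_UNIV]) (use d in auto)
      have "g (S - 1) \<le> g S" using monoD[OF mono] by simp
      hence J0: "J \<ge> 0" using t2 by simp
      have "B * \<bar>J\<bar> = B * J" using J0 by simp
      also have "\<dots> \<le> A * J" using BA J0 by (rule mult_right_mono)
      also have "\<dots> \<le> g (S + A) - g S" using t1 by (simp add: mult.commute)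
      finally show ?thesis .
    next
      case False
      have Jeq: "J = (g S - g su) / (S - su)" using ftc False by (simp add: field_simps)
      have Jle: "J \<le> (g (S + A) - g S) / A" and J0: "J \<ge> 0"
      proof -
        show "J \<le> (g (S + A) - g S) / A"
        proof (cases "su < S")
          case True thus ?thesis using slope[OF True Apos] Jeq by simp
        next
          case lt: False
          hence "S < su" using False by simp
          moreover have "su \<le> S + A" using cB BA by (simp add: abs_le_iff)
          moreover have "J = (g su - g S) / (su - S)" unfolding Jeq
            by (simp add: field_split_simps; simp add: algebra_simps)
          ultimately show ?thesis using slope2 by simp
        qed
        show "J \<ge> 0" unfolding Jeq
        proof (cases "su < S")
          case True thus "0 \<le> (g S - g su) / (S - su)" using monoD[OF mono, of su S] by simp
        next
          case lt: False
          hence "S < su" using False by simp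
          thus "0 \<le> (g S - g su) / (S - su)" using monoD[OF mono, of S su]
            by (simp add: divide_nonpos_neg)
        qed
      qed
      have "B * \<bar>J\<bar> = B * J" using J0 by simp
      also have "\<dots> \<le> A * J" using BA J0 by (rule mult_right_mono)
      also have "\<dots> \<le> A * ((g (S + A) - g S) / A)" using Jle Apos by (intro mult_left_mono) auto
      also have "\<dots> = g (S + A) - g S" using Apos by simp
      finally show ?thesis .
    qed
  qed
qed

lemma sfun_diff_bound:
  assumes y1: "\<bar>y\<bar> = 1"
  shows "\<bar>sfun y w x - sfun y w z\<bar> \<le> (\<Sum>i\<in>UNIV. \<bar>x$i - z$i\<bar> * \<bar>w$i\<bar>)"
proof -
  have "sfun y w x - sfun y w z = -(y * (w \<bullet> (x - z)))"
    unfolding sfun_def by (simp add: inner_diff_right algebra_simps)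
  hence "\<bar>sfun y w x - sfun y w z\<bar> = \<bar>w \<bullet> (x - z)\<bar>"
    by (simp add: abs_mult y1)
  also have "\<dots> = \<bar>\<Sum>i\<in>UNIV. w$i * (x$i - z$i)\<bar>" by (simp add: inner_vec_def)
  also have "\<dots> \<le> (\<Sum>i\<in>UNIV. \<bar>w$i * (x$i - z$i)\<bar>)" by (rule sum_abs)
  also have "\<dots> = (\<Sum>i\<in>UNIV. \<bar>x$i - z$i\<bar> * \<bar>w$i\<bar>)" by (simp add: abs_mult mult.commute)
  finally show ?thesis .
qed

lemma B_bound:
  assumes "z \<in> linf_cball x e"
  shows "(\<Sum>i\<in>UNIV. \<bar>x$i - z$i\<bar> * \<bar>w$i\<bar>) \<le> e * (\<Sum>i\<in>UNIV. \<bar>w$i\<bar>)"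
  unfolding sum_distrib_left
proof (rule sum_mono)
  fix i
  have "\<bar>x$i - z$i\<bar> \<le> e" using assms unfolding linf_cball_def by (simp add: abs_minus_commute)
  thus "\<bar>x$i - z$i\<bar> * \<bar>w$i\<bar> \<le> e * \<bar>w$i\<bar>" by (rule mult_right_mono) simp
qed

lemma loss_sfun: "loss g z y w = g (sfun y w z)"
  unfolding loss_def sfun_def ..

theorem theorem2:
  fixes g :: "real \<Rightarrow> real" and x w :: "real^'n" and y \<epsilon> :: real
  assumes "mono g"
    and "convex_on UNIV g"
    and "negligible {t. \<not> g differentiable (at t)}"
    and "y \<in> {-1, 1}"
    and "\<epsilon> > 0"
    and "\<forall>x' \<in> linf_cball x \<epsilon>. IG_well_defined (\<lambda>z. loss g z y w) x x'"
  shows "\<exists>m1 m2.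
           is_max ((\<lambda>x'. IG_l1 (\<lambda>z. loss g z y w) x x') ` linf_cball x \<epsilon>) m1 \<and>
           is_max ((\<lambda>\<delta>. loss g (x + \<delta>) y w) ` linf_cball 0 \<epsilon>) m2 \<and>
           loss g x y w + m1 = m2"
proof -
  note mono = assms(1) and conv = assms(2) and wd = assms(6)
  have y1: "\<bar>y\<bar> = 1" using assms(4) by auto
  have y0: "y \<noteq> 0" using y1 by auto
  have yy: "y * y = 1" using assms(4) by auto
  define S where "S = sfun y w x"
  define A where "A = \<epsilon> * (\<Sum>i\<in>UNIV. \<bar>w$i\<bar>)"
  have A0: "A \<ge> 0" unfolding A_def using assms(5) by (simp add: sum_nonneg)
  define ds :: "real^'n" where "ds = (\<chi> i. -(y * \<epsilon> * sgn (w$i)))"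
  have sgn1: "\<bar>sgn (r::real)\<bar> \<le> 1" for r by (simp add: sgn_real_def)
  have ds_in: "x + ds \<in> linf_cball x \<epsilon>"
    unfolding linf_cball_def ds_def using assms(5) sgn1
    by (auto simp: abs_mult y1 intro: mult_left_le)
  have ds_in0: "ds \<in> linf_cball 0 \<epsilon>"
    unfolding linf_cball_def ds_def using assms(5) sgn1
    by (auto simp: abs_mult y1 intro: mult_left_le)
  have wds: "w \<bullet> ds = -(y * A)"
  proof -
    have "w \<bullet> ds = (\<Sum>i\<in>UNIV. -(y * \<epsilon>) * (w$i * sgn (w$i)))"
      unfolding ds_def inner_vec_def by (simp add: algebra_simps)
    also have "\<dots> = (\<Sum>i\<in>UNIV. -(y * \<epsilon>) * \<bar>w$i\<bar>)"
      by (simp add: abs_sgn[symmetric])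
    also have "\<dots> = -(y * \<epsilon>) * (\<Sum>i\<in>UNIV. \<bar>w$i\<bar>)"
      by (rule sum_distrib_left[symmetric])
    also have "\<dots> = -(y * A)" unfolding A_def by simp
    finally show ?thesis .
  qed
  have s_ds: "sfun y w (x + ds) = S + A"
    unfolding S_def sfun_def using wds yy by (simp add: inner_add_right algebra_simps)
  have B_ds: "(\<Sum>i\<in>UNIV. \<bar>x$i - (x + ds)$i\<bar> * \<bar>w$i\<bar>) = A"
  proof -
    have eqi: "\<bar>x$i - (x + ds)$i\<bar> * \<bar>w$i\<bar> = \<epsilon> * \<bar>w$i\<bar>" for i
    proof -
      have "\<bar>x$i - (x + ds)$i\<bar> * \<bar>w$i\<bar> = \<epsilon> * (\<bar>sgn (w$i)\<bar> * \<bar>w$i\<bar>)"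
        unfolding ds_def using assms(5) by (simp add: abs_mult y1)
      also have "\<bar>sgn (w$i)\<bar> * \<bar>w$i\<bar> = \<bar>w$i\<bar>" by (simp add: sgn_real_def)
      finally show ?thesis .
    qed
    show ?thesis unfolding A_def sum_distrib_left by (rule sum.cong[OF refl eqi])
  qed
  have upper: "IG_l1 (\<lambda>z. loss g z y w) x u \<le> g (S + A) - g S" if u: "u \<in> linf_cball x \<epsilon>" for u
  proof -
    define B where "B = (\<Sum>i\<in>UNIV. \<bar>x$i - u$i\<bar> * \<bar>w$i\<bar>)"
    define J where "J = integral {0..1} (\<lambda>a. deriv g (sfun y w u + a * (sfun y w x - sfun y w u)))"
    have I: "IG_l1 (\<lambda>z. loss g z y w) x u = B * \<bar>J\<bar>"
      unfolding B_def J_def by (rule IG_l1_formula[OF y1 wd[rule_format, OF u]])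
    show ?thesis
    proof (cases "\<exists>i. w$i \<noteq> 0")
      case False
      hence "B = 0" unfolding B_def by simp
      thus ?thesis unfolding I using monoD[OF mono, of S "S + A"] A0 by simp
    next
      case True
      then obtain i where wi: "w$i \<noteq> 0" by blast
      note f = J_ftc[OF conv y0 wd[rule_format, OF u] wi]
      show ?thesis unfolding I
      proof (rule key_bound[OF mono conv])
        show "0 \<le> B" unfolding B_def by (simp add: sum_nonneg)
        show "B \<le> A" unfolding B_def A_def by (rule B_bound[OF u])
        show "\<bar>S - sfun y w u\<bar> \<le> B" unfolding S_def B_def by (rule sfun_diff_bound[OF y1])
        show "(S - sfun y w u) * J = g S - g (sfun y w u)" unfolding S_def J_def by (rule f(1))
        show "S = sfun y w u \<Longrightarrow> g differentiable at S \<and> J = deriv g S"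
          unfolding S_def J_def by (rule f(2))
      qed
    qed
  qed
  have attained: "IG_l1 (\<lambda>z. loss g z y w) x (x + ds) = g (S + A) - g S"
  proof -
    define J where "J = integral {0..1} (\<lambda>a. deriv g (sfun y w (x + ds) + a * (sfun y w x - sfun y w (x + ds))))"
    have I: "IG_l1 (\<lambda>z. loss g z y w) x (x + ds) = A * \<bar>J\<bar>"
      unfolding J_def B_ds[symmetric] by (rule IG_l1_formula[OF y1 wd[rule_format, OF ds_in]])
    show ?thesis
    proof (cases "A = 0")
      case True thus ?thesis unfolding I by simp
    next
      case False
      have "\<exists>i. w$i \<noteq> 0"
      proof (rule ccontr)
        assume "\<not> (\<exists>i. w$i \<noteq> 0)"
        hence "A = 0" unfolding A_def by simp
        thus False using False by simp
      qed
      then obtain i where wi: "w$i \<noteq> 0" by blast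
      have "(S - (S + A)) * J = g S - g (S + A)"
        using J_ftc(1)[OF conv y0 wd[rule_format, OF ds_in] wi] unfolding J_def s_ds S_def by simp
      hence "A * J = g (S + A) - g S" by (simp add: algebra_simps)
      hence "\<bar>A * J\<bar> = \<bar>g (S + A) - g S\<bar>" by simp
      hence "A * \<bar>J\<bar> = \<bar>g (S + A) - g S\<bar>" using A0 by (simp add: abs_mult)
      also have "\<dots> = g (S + A) - g S" using monoD[OF mono, of S "S + A"] A0 by simp
      finally show ?thesis unfolding I .
    qed
  qed
  have lupper: "loss g (x + \<delta>) y w \<le> g (S + A)" if d: "\<delta> \<in> linf_cball 0 \<epsilon>" for \<delta>
  proof -
    have xd: "x + \<delta> \<in> linf_cball x \<epsilon>" using d unfolding linf_cball_def by simp
    have "\<bar>sfun y w x - sfun y w (x + \<delta>)\<bar> \<le> A"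
      using sfun_diff_bound[OF y1, of w x "x + \<delta>"] B_bound[OF xd, of w] unfolding A_def by linarith
    hence "sfun y w (x + \<delta>) \<le> S + A" unfolding S_def by (simp add: abs_le_iff)
    thus ?thesis unfolding loss_sfun by (rule monoD[OF mono])
  qed
  show ?thesis
  proof (intro exI conjI)
    show "is_max ((\<lambda>x'. IG_l1 (\<lambda>z. loss g z y w) x x') ` linf_cball x \<epsilon>) (g (S + A) - g S)"
      unfolding is_max_def using upper attained ds_in by (auto intro!: image_eqI[of _ _ "x + ds"])
    show "is_max ((\<lambda>\<delta>. loss g (x + \<delta>) y w) ` linf_cball 0 \<epsilon>) (g (S + A))"
      unfolding is_max_def using lupper ds_in0 s_ds
      by (auto simp: loss_sfun intro!: image_eqI[of _ _ ds])
    show "loss g x y w + (g (S + A) - g S) = g (S + A)" unfolding loss_sfun S_def by simp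
  qed
qed

end
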